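(* Let $r,n,p,c$ be integers with $0\le r\le n$ and $0\le p\le n$. Then $F_q(r,n,c,p;k_1,\ldots,k_{n-r})=0$ whenever $k_1\in\{-1,-2,\ldots,-r\}$ or $k_{n-r}\in\{c+1,c+2,\ldots,c+r\}$.
   Context: For integers $0\le r\le n$ and $c$, an $(r,n,c)$-pattern is an array of integers $(a_{i,j})_{1\le i\le r+1,\ i-1\le j\le n+1}$ with $a_{i,i-1}=0$, $a_{i,n+1}=c$, and for all $2\le i\le r+1$, $i-1\le j\le n$: if $a_{i,j}\le a_{i,j+1}$ then $a_{i,j}\le a_{i-1,j}\le a_{i,j+1}$, and if $a_{i,j}>a_{i,j+1}$ then $a_{i,j}>a_{i-1,j}>a_{i,j+1}$. Its norm is $\sum_{i=1}^{r+1}\sum_{j=i}^{n}a_{i,j}$. An inversion is a pair $(a_{i,j},a_{i,j+1})$ with $a_{i,j}>a_{i,j+1}$ and $i\ne1$; $\operatorname{sgn}(a)=(-1)^{\#\text{inversions}}$. $F_q(r,n,c,p;k_1,\ldots,k_{n-r})=q^{-(k_1+\cdots+k_{n-r})}\sum_a\operatorname{sgn}(a)q^{\operatorname{norm}(a)}$, summed over all $(r,n,c)$-patterns with $a_{r+1,r+i}=k_i$ for $1\le i\le n-r$ and exactly $p$ of $a_{1,1},\ldots,a_{1,n}$ odd ($q$ an indeterminate). *)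

theory Defs
  imports "HOL-Computational_Algebra.Formal_Laurent_Series"
begin

text \<open>An (r,n,c)-pattern is represented as a function a :: int \<Rightarrow> int \<Rightarrow> int,
  a i j = a_{i,j}, on the index set 1 \<le> i \<le> r+1, i-1 \<le> j \<le> n+1, and
  (to make the representation unique) equal to 0 outside that index set.\<close>

definition pat_dom :: "int \<Rightarrow> int \<Rightarrow> int \<Rightarrow> int \<Rightarrow> bool" where
  "pat_dom r n i j \<longleftrightarrow> 1 \<le> i \<and> i \<le> r + 1 \<and> i - 1 \<le> j \<and> j \<le> n + 1"

definition is_pattern :: "int \<Rightarrow> int \<Rightarrow> int \<Rightarrow> (int \<Rightarrow> int \<Rightarrow> int) \<Rightarrow> bool" where
  "is_pattern r n c a \<longleftrightarrow>
     (\<forall>i j. \<not> pat_dom r n i j \<longrightarrow> a i j = 0) \<and>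
     (\<forall>i. 1 \<le> i \<and> i \<le> r + 1 \<longrightarrow> a i (i - 1) = 0 \<and> a i (n + 1) = c) \<and>
     (\<forall>i j. 2 \<le> i \<and> i \<le> r + 1 \<and> i - 1 \<le> j \<and> j \<le> n \<longrightarrow>
        (a i j \<le> a i (j + 1) \<longrightarrow> a i j \<le> a (i - 1) j \<and> a (i - 1) j \<le> a i (j + 1)) \<and>
        (a i j > a i (j + 1) \<longrightarrow> a i j > a (i - 1) j \<and> a (i - 1) j > a i (j + 1)))"

definition pat_norm :: "int \<Rightarrow> int \<Rightarrow> (int \<Rightarrow> int \<Rightarrow> int) \<Rightarrow> int" where
  "pat_norm r n a = (\<Sum>i\<in>{1..r+1}. \<Sum>j\<in>{i..n}. a i j)"

definition pat_inversions :: "int \<Rightarrow> int \<Rightarrow> (int \<Rightarrow> int \<Rightarrow> int) \<Rightarrow> (int \<times> int) set" where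
  "pat_inversions r n a =
     {(i, j). 2 \<le> i \<and> i \<le> r + 1 \<and> i - 1 \<le> j \<and> j \<le> n \<and> a i j > a i (j + 1)}"

definition pat_sgn :: "int \<Rightarrow> int \<Rightarrow> (int \<Rightarrow> int \<Rightarrow> int) \<Rightarrow> int" where
  "pat_sgn r n a = (-1) ^ card (pat_inversions r n a)"

definition F_patterns :: "int \<Rightarrow> int \<Rightarrow> int \<Rightarrow> nat \<Rightarrow> (int \<Rightarrow> int) \<Rightarrow> (int \<Rightarrow> int \<Rightarrow> int) set" where
  "F_patterns r n c p k =
     {a. is_pattern r n c a \<and>
         (\<forall>i. 1 \<le> i \<and> i \<le> n - r \<longrightarrow> a (r + 1) (r + i) = k i) \<and>
         card {j\<in>{1..n}. odd (a 1 j)} = p}"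

definition Fq :: "int \<Rightarrow> int \<Rightarrow> int \<Rightarrow> nat \<Rightarrow> (int \<Rightarrow> int) \<Rightarrow> int fls" where
  "Fq r n c p k =
     fls_X_intpow (- (\<Sum>i\<in>{1..n-r}. k i)) *
     (\<Sum>a\<in>F_patterns r n c p k. of_int (pat_sgn r n a) * fls_X_intpow (pat_norm r n a))"

end

theory Submission
  imports Defs
begin

lemma case1:
  assumes P: "is_pattern r n c a" and k: "a (r+1) (r+1) = -m" and m: "1 \<le> m" "m \<le> r" and rn: "r < n"
  shows False
proof -
  from P have Z: "\<And>i. 1 \<le> i \<Longrightarrow> i \<le> r + 1 \<Longrightarrow> a i (i - 1) = 0"
    unfolding is_pattern_def by blast
  from P have C: "\<And>i j. 2 \<le> i \<Longrightarrow> i \<le> r + 1 \<Longrightarrow> i - 1 \<le> j \<Longrightarrow> j \<le> n \<Longrightarrow>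
        a i j > a i (j + 1) \<Longrightarrow> a i j > a (i - 1) j \<and> a (i - 1) j > a i (j + 1)"
    unfolding is_pattern_def by blast
  have S: "int t \<le> r \<longrightarrow> -m + int t \<le> a (r+1-int t) (r+1-int t) \<and> a (r+1-int t) (r+1-int t) \<le> -1" for t :: nat
  proof (induction t)
    case 0 then show ?case using k m by simp
  next
    case (Suc t)
    show ?case
    proof
      assume h: "int (Suc t) \<le> r"
      define i where "i = r + 1 - int t"
      have IH: "-m + int t \<le> a i i" "a i i \<le> -1" using Suc h unfolding i_def by auto
      have z: "a i (i - 1) = 0" using Z[of i] h unfolding i_def by auto
      have ii: "i - 1 + 1 = i" by simp
      have "2 \<le> i" "i \<le> r + 1" "i - 1 \<le> n" using h rn unfolding i_def by auto
      then have "a i (i - 1) > a (i - 1) (i - 1) \<and> a (i - 1) (i - 1) > a i (i - 1 + 1)"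
        using C[of i "i - 1"] z IH ii by auto
      then have "a (i - 1) (i - 1) < 0" "a (i - 1) (i - 1) > a i i" using z by auto
      moreover have "r + 1 - int (Suc t) = i - 1" unfolding i_def by simp
      ultimately show "-m + int (Suc t) \<le> a (r+1-int (Suc t)) (r+1-int (Suc t)) \<and> a (r+1-int (Suc t)) (r+1-int (Suc t)) \<le> -1"
        using IH by auto
    qed
  qed
  have "0 \<le> r" using m by simp
  then have "int (nat r) \<le> r" by simp
  from S[of "nat r"] this have "-m + r \<le> a 1 1" "a 1 1 \<le> -1" using m by auto
  then show False using m by simp
qed

lemma case2:
  assumes P: "is_pattern r n c a" and k: "a (r+1) n = c + m" and m: "1 \<le> m" "m \<le> r" and rn: "r < n"
  shows False
proof -
  from P have Z: "\<And>i. 1 \<le> i \<Longrightarrow> i \<le> r + 1 \<Longrightarrow> a i (n + 1) = c"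
    unfolding is_pattern_def by blast
  from P have C: "\<And>i j. 2 \<le> i \<Longrightarrow> i \<le> r + 1 \<Longrightarrow> i - 1 \<le> j \<Longrightarrow> j \<le> n \<Longrightarrow>
        a i j > a i (j + 1) \<Longrightarrow> a i j > a (i - 1) j \<and> a (i - 1) j > a i (j + 1)"
    unfolding is_pattern_def by blast
  have S: "int t \<le> r \<longrightarrow> a (r+1-int t) n \<le> c + m - int t \<and> c + 1 \<le> a (r+1-int t) n" for t :: nat
  proof (induction t)
    case 0 then show ?case using k m by simp
  next
    case (Suc t)
    show ?case
    proof
      assume h: "int (Suc t) \<le> r"
      define i where "i = r + 1 - int t"
      have IH: "a i n \<le> c + m - int t" "c + 1 \<le> a i n" using Suc h unfolding i_def by auto
      have z: "a i (n + 1) = c" using Z[of i] h unfolding i_def by auto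
      have "a i n > a (i - 1) n \<and> a (i - 1) n > a i (n + 1)"
        using C[of i n] z IH h rn unfolding i_def by auto
      then have "a (i - 1) n > c" "a (i - 1) n < a i n" using z by auto
      moreover have "r + 1 - int (Suc t) = i - 1" unfolding i_def by simp
      ultimately show "a (r+1-int (Suc t)) n \<le> c + m - int (Suc t) \<and> c + 1 \<le> a (r+1-int (Suc t)) n"
        using IH by auto
    qed
  qed
  have "0 \<le> r" using m by simp
  then have "int (nat r) \<le> r" by simp
  from S[of "nat r"] this have "a 1 n \<le> c + m - r" "c + 1 \<le> a 1 n" using m by auto
  then show False using m by simp
qed

theorem lemma17:
  fixes r n p c :: int and k :: "int \<Rightarrow> int"
  assumes "0 \<le> r" "r \<le> n" "0 \<le> p" "p \<le> n" "r < n"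
    and "k 1 \<in> {-r..-1} \<or> k (n - r) \<in> {c+1..c+r}"
  shows "Fq r n c (nat p) k = 0"
proof -
  have "F_patterns r n c (nat p) k = {}"
  proof (rule ccontr)
    assume "F_patterns r n c (nat p) k \<noteq> {}"
    then obtain a where a: "is_pattern r n c a"
      and ak: "\<And>i. 1 \<le> i \<Longrightarrow> i \<le> n - r \<Longrightarrow> a (r + 1) (r + i) = k i"
      unfolding F_patterns_def by blast
    show False using assms(6)
    proof
      assume h: "k 1 \<in> {-r..-1}"
      have "a (r+1) (r+1) = - (- k 1)" using ak[of 1] assms by simp
      then show False using case1[OF a _ _ _ assms(5), of "- k 1"] h by auto
    next
      assume h: "k (n - r) \<in> {c+1..c+r}"
      have "a (r+1) n = c + (k (n - r) - c)" using ak[of "n - r"] assms by simp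
      then show False using case2[OF a _ _ _ assms(5), of "k (n - r) - c"] h by auto
    qed
  qed
  then show ?thesis unfolding Fq_def by simp
qed

end
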